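(* Let $E$ be a fixed-point equation system whose interpretation restricts to a map $[\![E]\!]_{\le 1}\colon\mathbb{E}_{\le 1}(D)\to\mathbb{E}_{\le 1}(D)$. Then for every $d\in D$ and every $\epsilon>0$ there exists $\eta'\in\mathbb{E}(D)$ with $\mu[\![E]\!]_{\le 1}(d)-\epsilon<\eta'(d)\le\mu[\![E]\!]_{\le 1}(d)$ such that there exist: a fixed-point equation system $E'$ over the same predicate variables with $[\![E']\!]\le[\![E]\!]$; $u\in\mathbb{E}(D)$ with $[\![E']\!](u)\le u$; a function $r\colon D\to[0,\infty)$ with $(\mathsf{D}[\![E']\!])(r)+u\le r$; and such that $\eta'\le u$ and $\eta'\le[\![E']\!](\eta')$.
   Context: $\mathbb{E}(D)$ is the set of functions $D\to[0,\infty]$ with pointwise order and operations ($\infty+x=\infty$, $0\cdot\infty=0$, $r\cdot\infty=\infty$ for $r>0$); $\mathbb{E}_{\le 1}(D)$ is the subset of functions $D\to[0,1]$; for $x\ge y$ in $[0,\infty]$, $x-y$ is the least $z$ with $x=y+z$; $\mathbb{O}$ is the zero function; $(\mathsf{D}K)(\eta)=K(\eta)-K(\mathbb{O})$; $\mu$ denotes least fixed point. Quantitative formulas over predicate variables $X_1,\dots,X_n$ ($X_j$ of type $D_j\to\Omega$): $F ::= X_j(\tilde e)\mid t\mid F_1+F_2\mid t\cdot F\mid \mathbf{if}\ \varphi\ \mathbf{then}\ F_1\ \mathbf{else}\ F_2$ with $\tilde e$ expressions, $t$ a $[0,\infty)$-valued term, $\varphi$ boolean; interpreted by $[\![X_j(e)]\!](\eta)(v)=\eta_j([\![e]\!](v))$,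 $[\![t]\!](\eta)(v)=[\![t]\!](v)$, pointwise sum and scalar product, case distinction for conditionals. A fixed-point equation system $E=\{X_i(\tilde x_i)=_\mu F_i\}_{i=1}^n$ has interpretation $[\![E]\!](\eta)=([\![F_1]\!](\eta),\dots,[\![F_n]\!](\eta))$ on $\mathbb{E}(D)$, $D=\coprod_j D_j$. (The existence of the data $E',u,r$ with the stated conditions is what the paper calls provability of $\eta'\le\mu[\![E]\!]$ by its proof rule.) *)

theory Defs
  imports "HOL-Library.Extended_Nonnegative_Real"
begin

text \<open>The domain D is the coproduct of the D_j, represented as a
type 'd together with a map summand :: 'd => 'i telling which summand D_j an element lies in.
An atom X_j(e) is given by its (semantic) expression e, which maps the values of the
argument variables (an element of D) to an element of D_j, i.e. of D.
Terms t are semantic [0,\<infinity>)-valued functions, guards are semantic boolean functions.\<close>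

datatype 'd qform =
    Atom "'d \<Rightarrow> 'd"
  | Term "'d \<Rightarrow> ennreal"
  | Plus "'d qform" "'d qform"
  | Scale "'d \<Rightarrow> ennreal" "'d qform"
  | Ite "'d \<Rightarrow> bool" "'d qform" "'d qform"

fun wf_qform :: "'d qform \<Rightarrow> bool" where
  "wf_qform (Atom e) = True"
| "wf_qform (Term t) = (\<forall>v. t v < \<infinity>)"
| "wf_qform (Plus F1 F2) = (wf_qform F1 \<and> wf_qform F2)"
| "wf_qform (Scale t F) = ((\<forall>v. t v < \<infinity>) \<and> wf_qform F)"
| "wf_qform (Ite \<phi> F1 F2) = (wf_qform F1 \<and> wf_qform F2)"

fun sem_qform :: "'d qform \<Rightarrow> ('d \<Rightarrow> ennreal) \<Rightarrow> 'd \<Rightarrow> ennreal" where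
  "sem_qform (Atom e) \<eta> v = \<eta> (e v)"
| "sem_qform (Term t) \<eta> v = t v"
| "sem_qform (Plus F1 F2) \<eta> v = sem_qform F1 \<eta> v + sem_qform F2 \<eta> v"
| "sem_qform (Scale t F) \<eta> v = t v * sem_qform F \<eta> v"
| "sem_qform (Ite \<phi> F1 F2) \<eta> v = (if \<phi> v then sem_qform F1 \<eta> v else sem_qform F2 \<eta> v)"

text \<open>An equation system: one equation X_i(x_i) = F_i per index i; the argument variables
x_i of the equation for index i are valuated by the element d of D_i.\<close>
type_synonym ('i, 'd) eqsys = "'i \<Rightarrow> 'd qform"

definition wf_eqsys :: "('i, 'd) eqsys \<Rightarrow> bool" where
  "wf_eqsys E = (\<forall>i. wf_qform (E i))"

definition sem_eqsys :: "('d \<Rightarrow> 'i) \<Rightarrow> ('i, 'd) eqsys \<Rightarrow> ('d \<Rightarrow> ennreal) \<Rightarrow> 'd \<Rightarrow> ennreal" where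
  "sem_eqsys summand E \<eta> d = sem_qform (E (summand d)) \<eta> d"

definition qminus :: "ennreal \<Rightarrow> ennreal \<Rightarrow> ennreal" where
  "qminus x y = Inf {z. x = y + z}"

definition Dop :: "(('d \<Rightarrow> ennreal) \<Rightarrow> 'd \<Rightarrow> ennreal) \<Rightarrow> ('d \<Rightarrow> ennreal) \<Rightarrow> 'd \<Rightarrow> ennreal" where
  "Dop K \<eta> d = qminus (K \<eta> d) (K (\<lambda>_. 0) d)"

definition bounded1 :: "('d \<Rightarrow> ennreal) \<Rightarrow> bool" where
  "bounded1 \<eta> = (\<forall>d. \<eta> d \<le> 1)"

text \<open>Least fixed point of K restricted to the complete lattice E_{<=1}(D)
(Knaster-Tarski: infimum of the prefixed points in E_{<=1}(D)).\<close>
definition lfp_le1 :: "(('d \<Rightarrow> ennreal) \<Rightarrow> 'd \<Rightarrow> ennreal) \<Rightarrow> 'd \<Rightarrow> ennreal" where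
  "lfp_le1 K = Inf {\<eta>. bounded1 \<eta> \<and> K \<eta> \<le> \<eta>}"

end

theory Submission
  imports Defs
begin

lemma sem_mono: "(\<And>x. \<eta> x \<le> \<eta>' x) \<Longrightarrow> sem_qform F \<eta> v \<le> sem_qform F \<eta>' v"
  by (induction F arbitrary: v) (auto intro: add_mono mult_left_mono)

lemma sem_scale_down: "(c::ennreal) \<le> 1 \<Longrightarrow> c * sem_qform F \<eta> v \<le> sem_qform F (\<lambda>x. c * \<eta> x) v"
proof (induction F arbitrary: v)
  case (Term t)
  then show ?case using mult_right_mono[of c 1 "t v"] by simp
next
  case (Plus F1 F2)
  then show ?case by (simp add: distrib_left add_mono)
next
  case (Scale t F)
  have "t v * (c * sem_qform F \<eta> v) \<le> t v * sem_qform F (\<lambda>x. c * \<eta> x) v"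
    using Scale by (simp add: mult_left_mono)
  then show ?case by (simp add: mult.left_commute)
qed auto

lemma sem_scale_up: "1 \<le> (R::ennreal) \<Longrightarrow> sem_qform F (\<lambda>x. R * \<eta> x) v \<le> R * sem_qform F \<eta> v"
proof (induction F arbitrary: v)
  case (Term t)
  then show ?case using mult_right_mono[of 1 R "t v"] by simp
next
  case (Plus F1 F2)
  then show ?case by (simp add: distrib_left add_mono)
next
  case (Scale t F)
  have "t v * sem_qform F (\<lambda>x. R * \<eta> x) v \<le> t v * (R * sem_qform F \<eta> v)"
    using Scale by (simp add: mult_left_mono)
  then show ?case by (simp add: mult.left_commute)
qed auto

lemma sem_cont:
  assumes inc: "\<And>n x. f n x \<le> f (Suc n) x"
  shows "sem_qform F (\<lambda>x. SUP n. f n x) v \<le> (SUP n. sem_qform F (f n) v)"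
proof (induction F arbitrary: v)
  case (Atom e)
  then show ?case by simp
next
  case (Term t)
  then show ?case by simp
next
  case (Plus F1 F2)
  have i1: "incseq (\<lambda>n. sem_qform F1 (f n) v)" "incseq (\<lambda>n. sem_qform F2 (f n) v)"
    by (auto intro!: incseq_SucI sem_mono inc)
  have "sem_qform (Plus F1 F2) (\<lambda>x. SUP n. f n x) v \<le> (SUP n. sem_qform F1 (f n) v) + (SUP n. sem_qform F2 (f n) v)"
    using Plus by (simp add: add_mono)
  also have "\<dots> = (SUP n. sem_qform F1 (f n) v + sem_qform F2 (f n) v)"
    using ennreal_SUP_add[OF i1] by simp
  finally show ?case by simp
next
  case (Scale t F)
  then show ?case by (simp add: SUP_mult_left_ennreal[symmetric] mult_left_mono)
next
  case (Ite \<phi> F1 F2)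
  then show ?case by simp
qed

lemma qminus_le: "b \<le> a \<Longrightarrow> qminus a b \<le> a"
  unfolding qminus_def
  by (rule order_trans[OF Inf_lower[of "a - b"]]) (auto simp: add_diff_inverse_ennreal)


theorem theorem4p9:
  fixes summand :: "'d \<Rightarrow> 'i::finite" and E :: "('i, 'd) eqsys"
    and d :: 'd and \<epsilon> :: real
  assumes wfE: "wf_eqsys E"
    and restr: "\<And>\<eta>. bounded1 \<eta> \<Longrightarrow> bounded1 (sem_eqsys summand E \<eta>)"
    and eps: "\<epsilon> > 0"
  shows "\<exists>\<eta>'. lfp_le1 (sem_eqsys summand E) d < \<eta>' d + ennreal \<epsilon>
           \<and> \<eta>' d \<le> lfp_le1 (sem_eqsys summand E) d
           \<and> (\<exists>E' u r. wf_eqsys E'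
                \<and> (\<forall>\<eta>. sem_eqsys summand E' \<eta> \<le> sem_eqsys summand E \<eta>)
                \<and> sem_eqsys summand E' u \<le> u
                \<and> (\<forall>x. r x < \<infinity>)
                \<and> (\<lambda>x. Dop (sem_eqsys summand E') r x + u x) \<le> r
                \<and> \<eta>' \<le> u
                \<and> \<eta>' \<le> sem_eqsys summand E' \<eta>')"
proof -
  define K where "K = sem_eqsys summand E"
  define L where "L = lfp_le1 K"
  have Kmono: "K \<eta> x \<le> K \<eta>' x" if "\<eta> \<le> \<eta>'" for \<eta> \<eta>' x
    unfolding K_def sem_eqsys_def using that by (intro sem_mono) (simp add: le_fun_def)
  have Kb: "bounded1 \<eta> \<Longrightarrow> bounded1 (K \<eta>)" for \<eta> using restr K_def by simp
  define \<psi> where "\<psi> k = (K ^^ k) (\<lambda>_. 0)" for k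
  have \<psi>S: "\<psi> (Suc k) = K (\<psi> k)" for k by (simp add: \<psi>_def)
  have \<psi>b: "bounded1 (\<psi> k)" for k
    by (induction k) (auto simp: \<psi>S Kb, simp add: \<psi>_def bounded1_def)
  have \<psi>inc: "\<psi> k \<le> \<psi> (Suc k)" for k
  proof (induction k)
    case 0 then show ?case by (simp add: \<psi>_def le_fun_def)
  next
    case (Suc k) then show ?case by (simp only: \<psi>S) (simp add: le_fun_def Kmono)
  qed
  have \<psi>L: "\<psi> k \<le> L" for k
    unfolding L_def lfp_le1_def
  proof (rule Inf_greatest)
    fix \<eta> assume "\<eta> \<in> {\<eta>. bounded1 \<eta> \<and> K \<eta> \<le> \<eta>}"
    then have pre: "K \<eta> \<le> \<eta>" by simp
    show "\<psi> k \<le> \<eta>"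
    proof (induction k)
      case 0 then show ?case by (simp add: \<psi>_def le_fun_def)
    next
      case (Suc k)
      then show ?case unfolding \<psi>S le_fun_def using Kmono[OF Suc] pre
        by (meson le_fun_def order_trans)
    qed
  qed
  define S where "S = (\<lambda>x. SUP k. \<psi> k x)"
  have Sb: "bounded1 S" using \<psi>b by (auto simp: S_def bounded1_def intro: SUP_least)
  have KS: "K S \<le> S"
  proof (rule le_funI)
    fix x
    have "K S x \<le> (SUP n. sem_qform (E (summand x)) (\<psi> n) x)"
      unfolding K_def sem_eqsys_def S_def
      by (rule sem_cont) (use \<psi>inc in \<open>simp add: le_fun_def\<close>)
    also have "\<dots> = (SUP n. \<psi> (Suc n) x)" by (simp add: \<psi>S K_def sem_eqsys_def)
    also have "\<dots> \<le> S x" unfolding S_def by (rule SUP_least, rule SUP_upper) simp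
    finally show "K S x \<le> S x" .
  qed
  have LS: "L \<le> S" unfolding L_def lfp_le1_def using Sb KS by (auto intro: Inf_lower)
  have Sd1: "S d \<le> 1" using Sb unfolding bounded1_def by blast
  have e2: "ennreal (\<epsilon>/2) > 0" using eps by simp
  have "L d \<le> S d" using LS by (rule le_funD)
  also have "S d < S d + ennreal (\<epsilon>/2)"
    using Sd1 e2 by (metis add.right_neutral ennreal_add_left_cancel_less ennreal_one_less_top le_less_trans order_less_imp_not_less top.not_eq_extremum)
  also have "\<dots> = (SUP k. \<psi> k d + ennreal (\<epsilon>/2))"
    unfolding S_def by (simp add: ennreal_SUP_add_left)
  finally obtain k where k: "L d < \<psi> k d + ennreal (\<epsilon>/2)" by (auto simp: less_SUP_iff)
  define \<delta> :: real where "\<delta> = min (1/2) (\<epsilon> / (2 * (real k + 1)))"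
  define c :: real where "c = 1 - \<delta>"
  have \<delta>pos: "0 < \<delta>" using eps by (simp add: \<delta>_def)
  have c01: "0 \<le> c" "c < 1" using \<delta>pos by (auto simp: c_def \<delta>_def)
  have ck: "1 - \<epsilon>/2 \<le> c ^ k"
  proof -
    have "1 + real k * (- \<delta>) \<le> (1 + (- \<delta>)) ^ k"
      by (rule Bernoulli_inequality) (simp add: \<delta>_def)
    moreover have "real k * \<delta> \<le> \<epsilon>/2"
    proof -
      have "real k * \<delta> \<le> real k * (\<epsilon> / (2 * (real k + 1)))"
        by (rule mult_left_mono) (auto simp: \<delta>_def)
      also have "\<dots> \<le> \<epsilon>/2" using eps by (simp add: field_simps)
      finally show ?thesis .
    qed
    ultimately show ?thesis by (simp add: c_def)
  qed
  define cK where "cK \<eta> = (\<lambda>x. ennreal c * K \<eta> x)" for \<eta>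
  define \<phi> where "\<phi> j = (cK ^^ j) (\<lambda>_. 0)" for j
  have \<phi>S: "\<phi> (Suc j) = cK (\<phi> j)" for j by (simp add: \<phi>_def)
  have c1: "ennreal c \<le> 1" using c01 by simp
  have cKmono: "\<eta> \<le> \<eta>' \<Longrightarrow> cK \<eta> \<le> cK \<eta>'" for \<eta> \<eta>'
    unfolding cK_def by (rule le_funI, rule mult_left_mono, erule Kmono, simp)
  have \<phi>\<psi>: "\<phi> j \<le> \<psi> j" for j
  proof (induction j)
    case 0 then show ?case by (simp add: \<phi>_def \<psi>_def)
  next
    case (Suc j)
    show ?case unfolding \<phi>S \<psi>S le_fun_def cK_def
    proof
      fix x
      have "ennreal c * K (\<phi> j) x \<le> K (\<phi> j) x" using mult_right_mono[OF c1, of "K (\<phi> j) x"] by simp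
      also have "\<dots> \<le> K (\<psi> j) x" using Kmono[OF Suc] .
      finally show "ennreal c * K (\<phi> j) x \<le> K (\<psi> j) x" .
    qed
  qed
  have \<phi>inc: "\<phi> j \<le> \<phi> (Suc j)" for j
  proof (induction j)
    case 0 then show ?case by (simp add: \<phi>_def le_fun_def)
  next
    case (Suc j) then show ?case by (simp only: \<phi>S) (rule cKmono)
  qed
  have \<phi>low: "ennreal (c ^ j) * \<psi> j x \<le> \<phi> j x" for j x
  proof (induction j arbitrary: x)
    case 0 then show ?case by (simp add: \<phi>_def \<psi>_def)
  next
    case (Suc j)
    have cj1: "ennreal (c ^ j) \<le> 1" using c01 by (simp add: power_le_one)
    have "ennreal (c ^ Suc j) * \<psi> (Suc j) x = ennreal c * (ennreal (c ^ j) * K (\<psi> j) x)"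
      using c01 by (simp add: \<psi>S ennreal_mult mult.assoc)
    also have "\<dots> \<le> ennreal c * K (\<lambda>y. ennreal (c ^ j) * \<psi> j y) x"
      using sem_scale_down[OF cj1, of "E (summand x)" "\<psi> j" x]
      by (intro mult_left_mono) (simp_all add: K_def sem_eqsys_def)
    also have "\<dots> \<le> ennreal c * K (\<phi> j) x"
      by (intro mult_left_mono Kmono) (simp_all add: le_fun_def Suc)
    finally show ?case by (simp add: \<phi>S cK_def)
  qed
  define E' :: "('i, 'd) eqsys" where "E' i = Scale (\<lambda>_. ennreal c) (E i)" for i
  have semE': "sem_eqsys summand E' = cK"
    by (intro ext) (simp add: E'_def cK_def K_def sem_eqsys_def)
  define R :: real where "R = 1 / (1 - c)"
  have R1: "1 \<le> R" using c01 by (simp add: R_def)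
  have Rid: "c * R + 1 = R" using c01 by (simp add: R_def field_simps)
  define \<eta>' where "\<eta>' = \<phi> k"
  have \<phi>b: "bounded1 (\<phi> j)" for j
    using \<phi>\<psi>[of j] \<psi>b[of j] unfolding bounded1_def le_fun_def by (meson order_trans)
  have main: "L d < \<eta>' d + ennreal \<epsilon>"
  proof -
    obtain a where a: "\<psi> k d = ennreal a" "0 \<le> a" "a \<le> 1"
      using \<psi>b[of k] unfolding bounded1_def
      by (metis ennreal_cases ennreal_le_1 ennreal_one_less_top order.strict_iff_not top_greatest order_trans)
    have "(1 - c^k) * a \<le> \<epsilon>/2"
    proof -
      have "(1 - c^k) * a \<le> (1 - c^k) * 1"
        using a c01 by (intro mult_left_mono) (auto simp: power_le_one)
      then show ?thesis using ck by simp
    qed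
    then have "a + \<epsilon>/2 \<le> c^k * a + \<epsilon>" by (simp add: algebra_simps)
    then have "ennreal (a + \<epsilon>/2) \<le> ennreal (c^k * a + \<epsilon>)" by (rule ennreal_leI)
    moreover have "ennreal (a + \<epsilon>/2) = \<psi> k d + ennreal (\<epsilon>/2)"
      using a eps by (simp add: ennreal_plus)
    moreover have "ennreal (c^k * a + \<epsilon>) = ennreal (c^k) * \<psi> k d + ennreal \<epsilon>"
      using a eps c01 by (simp add: ennreal_plus ennreal_mult)
    moreover have "ennreal (c^k) * \<psi> k d + ennreal \<epsilon> \<le> \<eta>' d + ennreal \<epsilon>"
      using \<phi>low[of k d] by (simp add: \<eta>'_def add_right_mono)
    ultimately show ?thesis using k by (metis order_less_le_trans order_trans)
  qed
  show ?thesis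
  proof (intro exI conjI)
    show "lfp_le1 (sem_eqsys summand E) d < \<eta>' d + ennreal \<epsilon>" using main by (simp add: L_def K_def)
    show "\<eta>' d \<le> lfp_le1 (sem_eqsys summand E) d"
      using \<phi>\<psi>[of k] \<psi>L[of k] by (simp add: \<eta>'_def L_def K_def le_fun_def) (meson order_trans)
    show "wf_eqsys E'" using wfE by (simp add: wf_eqsys_def E'_def)
    show "\<forall>\<eta>. sem_eqsys summand E' \<eta> \<le> sem_eqsys summand E \<eta>"
    proof (intro allI le_funI)
      fix \<eta> x
      show "sem_eqsys summand E' \<eta> x \<le> sem_eqsys summand E \<eta> x"
        unfolding semE' cK_def K_def[symmetric]
        using mult_right_mono[OF c1, of "K \<eta> x"] by simp
    qed
    show "sem_eqsys summand E' (\<lambda>_. 1) \<le> (\<lambda>_. 1)"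
      unfolding semE' cK_def le_fun_def
    proof
      fix x
      have "K (\<lambda>_. 1) x \<le> 1" using Kb[of "\<lambda>_. 1"] by (simp add: bounded1_def)
      then show "ennreal c * K (\<lambda>_. 1) x \<le> 1" using c1 by (metis mult_le_one zero_le)
    qed
    show "\<forall>x. (\<lambda>_. ennreal R) x < \<infinity>" by simp
    show "(\<lambda>x. Dop (sem_eqsys summand E') (\<lambda>_. ennreal R) x + 1) \<le> (\<lambda>_. ennreal R)"
    proof (rule le_funI)
      fix x
      have "K (\<lambda>_. 0) x \<le> K (\<lambda>_. ennreal R) x" by (rule Kmono) (simp add: le_fun_def)
      then have "Dop (sem_eqsys summand E') (\<lambda>_. ennreal R) x \<le> ennreal c * K (\<lambda>_. ennreal R) x"
        unfolding Dop_def semE' cK_def by (intro qminus_le mult_left_mono) simp_all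
      also have "K (\<lambda>_. ennreal R) x \<le> ennreal R * K (\<lambda>_. 1) x"
        using sem_scale_up[of "ennreal R" "E (summand x)" "\<lambda>_. 1" x] R1
        by (simp add: K_def sem_eqsys_def)
      also have "K (\<lambda>_. 1) x \<le> 1" using Kb[of "\<lambda>_. 1"] by (simp add: bounded1_def)
      finally have "Dop (sem_eqsys summand E') (\<lambda>_. ennreal R) x \<le> ennreal c * (ennreal R * 1)"
        by (simp add: mult_left_mono)
      then have "Dop (sem_eqsys summand E') (\<lambda>_. ennreal R) x + 1 \<le> ennreal (c * R + 1)"
        using c01 R1 by (simp add: ennreal_plus ennreal_mult add_right_mono)
      then show "Dop (sem_eqsys summand E') (\<lambda>_. ennreal R) x + 1 \<le> ennreal R" using Rid by simp
    qed
    show "\<eta>' \<le> (\<lambda>_. 1)" using \<phi>b[of k] by (simp add: \<eta>'_def bounded1_def le_fun_def)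
    show "\<eta>' \<le> sem_eqsys summand E' \<eta>'" using \<phi>inc[of k] by (simp add: semE' \<eta>'_def \<phi>S)
  qed
qed

end
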